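(* Fix an integer $N\ge2$ and $n,m\in\{0,\dots,N-1\}$. There exists a rational function $\widehat R_{n,m}(X)\in\mathbb{Q}(X)$, independent of $p$, with no pole at $X=-1$ nor at any primitive $2p$-th root of unity for odd $p\ge 2N+1$, such that for every odd $p\ge2N+1$ and every primitive $2p$-th root of unity $A$, with $c=\frac{p-1}{2}-N$: (i) $R^{(c)}_{n,m}=\widehat R_{n,m}(A)$, where $$R^{(c)}_{n,m}=\frac{\{m\}!\,\{2c+2n+1\}!!\,\{2c+n+1\}^+!}{\{n\}!\,\{2c+2m+1\}!!\,\{2c+m+1\}^+!};$$ (ii) $\widehat R_{n,m}(-1)=\dfrac{(-4)^{n-m}\,m!\,(N-1-m)!}{n!\,(N-1-n)!}$.
   Context: For a primitive $2p$-th root of unity $A$ ($p$ odd) and an integer $k$: $\{k\}=(-A)^k-(-A)^{-k}$, $\{k\}^+=(-A)^k+(-A)^{-k}$; for $k\ge1$, $\{k\}!=\{1\}\cdots\{k\}$ and $\{k\}^+!=\{1\}^+\cdots\{k\}^+$, with $\{0\}!=\{0\}^+!=1$; $\{k\}!!=\{k\}\{k-2\}\{k-4\}\cdots$ (product of the positive terms of the same parity down to $1$ or $2$). The quantity $R^{(c)}_{n,m}$ is the ratio $((Q'_n,Q'_n))/((Q'_m,Q'_m))$ of Hopf-pairing norms of the basis vectors $Q'^{(c)}_n$ of the $SO(3)$-TQFT space of the one-holed torus, but the claim concerns only the displayed formula. *)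

theory Defs
  imports Complex_Main "HOL-Computational_Algebra.Polynomial"
begin

definition qint :: "complex \<Rightarrow> nat \<Rightarrow> complex" where
  "qint A k = (-A) ^ k - inverse ((-A) ^ k)"

definition qintp :: "complex \<Rightarrow> nat \<Rightarrow> complex" where
  "qintp A k = (-A) ^ k + inverse ((-A) ^ k)"

definition qfact :: "complex \<Rightarrow> nat \<Rightarrow> complex" where
  "qfact A k = (\<Prod>i = 1..k. qint A i)"

definition qfactp :: "complex \<Rightarrow> nat \<Rightarrow> complex" where
  "qfactp A k = (\<Prod>i = 1..k. qintp A i)"

definition qdfact :: "complex \<Rightarrow> nat \<Rightarrow> complex" where
  "qdfact A k = (\<Prod>i \<in> {i. 1 \<le> i \<and> i \<le> k \<and> even (k - i)}. qint A i)"

definition primitive_root_of_unity :: "nat \<Rightarrow> complex \<Rightarrow> bool" where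
  "primitive_root_of_unity r A \<longleftrightarrow> A ^ r = 1 \<and> (\<forall>k. 0 < k \<and> k < r \<longrightarrow> A ^ k \<noteq> 1)"

definition Rc :: "complex \<Rightarrow> nat \<Rightarrow> nat \<Rightarrow> nat \<Rightarrow> complex" where
  "Rc A c n m =
     (qfact A m * qdfact A (2*c + 2*n + 1) * qfactp A (2*c + n + 1)) /
     (qfact A n * qdfact A (2*c + 2*m + 1) * qfactp A (2*c + m + 1))"

definition cpoly :: "rat poly \<Rightarrow> complex \<Rightarrow> complex" where
  "cpoly P z = poly (map_poly of_rat P) z"

end

theory Submission imports Defs begin

lemma map_poly_of_rat_mult:
  "map_poly (of_rat::rat\<Rightarrow>complex) (p*q) = map_poly of_rat p * map_poly of_rat q"
  by (rule poly_eqI) (simp add: coeff_map_poly coeff_mult of_rat_sum of_rat_mult)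

lemma map_poly_of_rat_add:
  "map_poly (of_rat::rat\<Rightarrow>complex) (p+q) = map_poly of_rat p + map_poly of_rat q"
  by (rule poly_eqI) (simp add: coeff_map_poly of_rat_add)

lemma map_poly_of_rat_uminus:
  "map_poly (of_rat::rat\<Rightarrow>complex) (-p) = - map_poly of_rat p"
  by (rule poly_eqI) (simp add: coeff_map_poly of_rat_minus)

lemma cpoly_mult[simp]: "cpoly (p*q) z = cpoly p z * cpoly q z"
  by (simp add: cpoly_def map_poly_of_rat_mult)
lemma cpoly_add[simp]: "cpoly (p+q) z = cpoly p z + cpoly q z"
  by (simp add: cpoly_def map_poly_of_rat_add)
lemma cpoly_uminus[simp]: "cpoly (-p) z = - cpoly p z"
  by (simp add: cpoly_def map_poly_of_rat_uminus)
lemma cpoly_1[simp]: "cpoly 1 z = 1"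
  by (simp add: cpoly_def)
lemma cpoly_monom[simp]: "cpoly (monom c n) z = of_rat c * z ^ n"
  by (simp add: cpoly_def map_poly_monom poly_monom)
lemma cpoly_X[simp]: "cpoly [:0, -1:] z = - z"
  by (simp add: cpoly_def map_poly_pCons of_rat_minus)
lemma cpoly_power[simp]: "cpoly (p ^ k) z = cpoly p z ^ k"
  by (induction k) auto
lemma cpoly_prod[simp]: "cpoly (\<Prod>i\<in>S. f i) z = (\<Prod>i\<in>S. cpoly (f i) z)"
  by (induction S rule: infinite_finite_induct) auto
lemma cpoly_sum[simp]: "cpoly (\<Sum>i\<in>S. f i) z = (\<Sum>i\<in>S. cpoly (f i) z)"
  by (induction S rule: infinite_finite_induct) (auto simp: cpoly_def map_poly_of_rat_add)

definition PS :: "nat \<Rightarrow> rat poly" where "PS k = (\<Sum>i<k. monom 1 (2*i))"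
definition PT :: "nat \<Rightarrow> rat poly" where "PT k = monom 1 (2*k) + 1"
definition MM :: "nat \<Rightarrow> rat poly" where "MM k = [:0, -1:] ^ k"

lemma cpoly_PS: "cpoly (PS k) z = (\<Sum>i<k. (z^2)^i)"
  by (simp add: PS_def power_mult)
lemma cpoly_PT: "cpoly (PT k) z = (z^2)^k + 1"
  by (simp add: PT_def power_mult)
lemma cpoly_MM: "cpoly (MM k) z = (-z)^k"
  by (simp add: MM_def)

lemma poly_PS: "poly (PS k) (-1) = of_nat k"
  by (simp add: PS_def poly_sum poly_monom)
lemma poly_PT: "poly (PT k) (-1) = 2"
  by (simp add: PT_def poly_monom)
lemma poly_MM: "poly (MM k) (-1) = 1"
  by (simp add: MM_def)

lemma qint_eq:
  assumes "A \<noteq> 0"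
  shows "qint A k = (A^2 - 1) * cpoly (PS k) A / cpoly (MM k) A"
proof -
  have "(A^2 - 1) * cpoly (PS k) A = (A^2)^k - 1"
    by (simp add: cpoly_PS power_diff_1_eq)
  also have "(A^2)^k = (-A)^k * (-A)^k"
    by (metis power2_minus power_mult power_mult_distrib power2_eq_square)
  finally show ?thesis using assms
    by (simp add: qint_def cpoly_MM field_simps)
qed

lemma qintp_eq:
  assumes "A \<noteq> 0"
  shows "qintp A k = cpoly (PT k) A / cpoly (MM k) A"
proof -
  have "(A^2)^k = (-A)^k * (-A)^k"
    by (metis power2_minus power_mult power_mult_distrib power2_eq_square)
  then show ?thesis using assms
    by (simp add: qintp_def cpoly_MM cpoly_PT field_simps)
qed


lemma qdfact_step: "qdfact A (k+2) = qint A (k+2) * qdfact A k"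
proof -
  have "{i. 1 \<le> i \<and> i \<le> k+2 \<and> even (k+2-i)} = insert (k+2) {i. 1 \<le> i \<and> i \<le> k \<and> even (k-i)}"
  proof (rule set_eqI)
    fix i :: nat
    have "i \<le> k \<Longrightarrow> k+2-i = (k-i)+2" by simp
    moreover have "i \<le> k+2 \<longleftrightarrow> i \<le> k \<or> i = k+1 \<or> i = k+2" by auto
    ultimately show "i \<in> {i::nat. 1 \<le> i \<and> i \<le> k+2 \<and> even (k+2-i)} \<longleftrightarrow> i \<in> insert (k+2) {i. 1 \<le> i \<and> i \<le> k \<and> even (k-i)}"
      by auto
  qed
  moreover have "finite {i. 1 \<le> i \<and> i \<le> k \<and> even (k-i)}" by (rule finite_subset[of _ "{..k}"]) auto
  ultimately show ?thesis by (simp add: qdfact_def)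
qed

lemma qdfact_add: "qdfact A (d + 2*n) = qdfact A d * (\<Prod>j=1..n. qint A (d+2*j))"
proof (induction n)
  case 0 then show ?case by simp
next
  case (Suc n)
  have "qdfact A (d + 2*Suc n) = qdfact A ((d+2*n)+2)" by simp
  also have "\<dots> = qint A (d + 2*Suc n) * qdfact A (d+2*n)" by (subst qdfact_step) simp
  finally show ?case using Suc by (simp add: prod.cl_ivl_Suc)
qed

lemma qfactp_add: "qfactp A (d + n) = qfactp A d * (\<Prod>j=1..n. qintp A (d+j))"
proof (induction n)
  case 0 then show ?case by simp
next
  case (Suc n)
  then show ?case
    by (simp add: qfactp_def prod.cl_ivl_Suc)
qed


locale proot =
  fixes p :: nat and A :: complex
  assumes oddp: "odd p" and prim: "primitive_root_of_unity (2*p) A" and p1: "p > 1"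
begin

lemma A2p: "A^(2*p) = 1" using prim by (simp add: primitive_root_of_unity_def)
lemma Ak: "0 < k \<Longrightarrow> k < 2*p \<Longrightarrow> A^k \<noteq> 1" using prim by (simp add: primitive_root_of_unity_def)

lemma Anz: "A \<noteq> 0" using A2p p1 by (auto simp: power_0_left)

lemma Ap: "A^p = -1"
proof -
  have "(A^p)^2 = 1" using A2p by (metis power_mult mult.commute)
  then have "A^p = 1 \<or> A^p = -1" by (simp add: power2_eq_1_iff)
  moreover have "A^p \<noteq> 1" using Ak[of p] p1 by simp
  ultimately show ?thesis by blast
qed

lemma mAp: "(-A)^p = 1"
  using Ap oddp by (simp add: power_minus_odd)

lemma refl_pow: "j \<le> p \<Longrightarrow> (-A)^(p-j) = inverse ((-A)^j)"
proof -
  assume "j \<le> p"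
  then have "(-A)^(p-j) * (-A)^j = 1" using mAp by (metis power_add le_add_diff_inverse2)
  then show ?thesis using Anz by (simp add: field_simps inverse_eq_divide)
qed

lemma qint_refl: "j \<le> p \<Longrightarrow> qint A (p-j) = - qint A j"
  using refl_pow Anz by (simp add: qint_def)

lemma qintp_refl: "j \<le> p \<Longrightarrow> qintp A (p-j) = qintp A j"
  using refl_pow Anz by (simp add: qintp_def)

lemma qint_nz: "0 < k \<Longrightarrow> k < p \<Longrightarrow> qint A k \<noteq> 0"
proof
  assume k: "0 < k" "k < p" and "qint A k = 0"
  then have "(-A)^k * (-A)^k = 1" using Anz by (simp add: qint_def field_simps)
  then have "A^(2*k) = 1" by (metis power2_minus power_mult power_mult_distrib power2_eq_square mult.commute)
  then show False using Ak[of "2*k"] k by simp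
qed

lemma qintp_nz: "qintp A k \<noteq> 0"
proof
  assume "qintp A k = 0"
  then have "(-A)^k * (-A)^k = -1" using Anz by (simp add: qintp_def field_simps add_eq_0_iff)
  then have "((-A)^k * (-A)^k)^p = -1" using oddp by simp
  moreover have "((-A)^k)^p = 1"
    by (metis power_mult mult.commute mAp power_one)
  then have "((-A)^k * (-A)^k)^p = 1"
    by (simp only: power_mult_distrib) simp
  ultimately show False by simp
qed

end


definition U :: "nat \<Rightarrow> rat poly" where "U k = (\<Prod>i=1..k. PS i)"
definition V :: "nat \<Rightarrow> rat poly" where "V k = (\<Prod>i=1..k. MM i)"
definition W :: "nat \<Rightarrow> nat \<Rightarrow> rat poly" where
  "W N k = (\<Prod>j=1..k. - (PS (2*N-2*j) * PT (2*N-j)))"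
definition Z :: "nat \<Rightarrow> nat \<Rightarrow> rat poly" where
  "Z N k = (\<Prod>j=1..k. MM (2*N-2*j) * MM (2*N-j))"

lemma prod_rep: "(\<Prod>i\<in>{1..k}. (E::complex) * f i / g i) = E^k * (\<Prod>i\<in>{1..k}. f i) / (\<Prod>i\<in>{1..k}. g i)"
  by (simp add: prod_dividef prod.distrib)

lemma U_val: "poly (U k) (-1) = fact k"
  by (simp add: U_def poly_prod poly_PS fact_prod)

lemma V_val: "poly (V k) (-1) = 1"
  by (simp add: V_def poly_prod poly_MM)

lemma Z_val: "poly (Z N k) (-1) = 1"
  by (simp add: Z_def poly_prod poly_MM)

lemma W_val: "k \<le> N - 1 \<Longrightarrow> poly (W N k) (-1) * fact (N-1-k) = (-4)^k * (fact (N-1) :: rat)"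
proof (induction k)
  case 0 then show ?case by (simp add: W_def)
next
  case (Suc k)
  have e1: "N-1-k = Suc (N-1-Suc k)" using Suc.prems by simp
  have e2: "2*N - 2*Suc k = 2 * (N-1-k)" using Suc.prems by simp
  have "poly (W N (Suc k)) (-1) = poly (W N k) (-1) * (- (of_nat (2*N - 2*Suc k) * 2))"
    by (simp add: W_def poly_prod poly_PS poly_PT prod.cl_ivl_Suc)
  also have "(of_nat (2*N - 2*Suc k) :: rat) * 2 = 4 * of_nat (N-1-k)" unfolding e2 by simp
  also have "poly (W N k) (-1) * (- (4 * of_nat (N-1-k))) = poly (W N k) (-1) * (-4 * of_nat (N-1-k))" by simp
  finally have "poly (W N (Suc k)) (-1) * fact (N-1-Suc k) =
      -4 * (poly (W N k) (-1) * (of_nat (N-1-k) * fact (N-1-Suc k)))" by simp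
  also have "of_nat (N-1-k) * fact (N-1-Suc k) = (fact (N-1-k) :: rat)"
    unfolding e1 by (simp only: fact_Suc)
  finally show ?case using Suc by simp
qed

context proot begin

lemma E_nz: "A^2 - 1 \<noteq> 0" using Ak[of 2] p1 by simp

lemma qfact_rep: "qfact A k = (A^2-1)^k * cpoly (U k) A / cpoly (V k) A"
proof -
  have "qfact A k = (\<Prod>i\<in>{1..k}. (A^2-1) * cpoly (PS i) A / cpoly (MM i) A)"
    unfolding qfact_def by (rule prod.cong) (simp_all add: qint_eq[OF Anz])
  also have "\<dots> = (A^2-1)^k * cpoly (U k) A / cpoly (V k) A"
    by (simp only: prod_rep U_def V_def cpoly_prod)
  finally show ?thesis .
qed

lemma V_nz: "cpoly (V k) A \<noteq> 0" using Anz by (simp add: V_def cpoly_MM)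
lemma Z_nz: "cpoly (Z N k) A \<noteq> 0" using Anz by (simp add: Z_def cpoly_MM)

definition H :: "nat \<Rightarrow> nat \<Rightarrow> complex" where
  "H N k = (\<Prod>j=1..k. - qint A (2*N-2*j) * qintp A (2*N-j))"

lemma H_rep: "H N k = (A^2-1)^k * cpoly (W N k) A / cpoly (Z N k) A"
proof -
  have "H N k = (\<Prod>j\<in>{1..k}. (A^2-1) * cpoly (- (PS (2*N-2*j) * PT (2*N-j))) A
      / cpoly (MM (2*N-2*j) * MM (2*N-j)) A)"
    unfolding H_def by (rule prod.cong) (simp_all add: qint_eq[OF Anz] qintp_eq[OF Anz])
  also have "\<dots> = (A^2-1)^k * cpoly (W N k) A / cpoly (Z N k) A"
    by (simp only: prod_rep W_def Z_def cpoly_prod)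
  finally show ?thesis .
qed

lemma qfact_nz: "k < p \<Longrightarrow> qfact A k \<noteq> 0"
  by (simp add: qfact_def qint_nz)

lemma qfactp_nz: "qfactp A k \<noteq> 0"
  by (simp add: qfactp_def qintp_nz)

lemma qdfact_nz: "k < p \<Longrightarrow> qdfact A k \<noteq> 0"
proof -
  assume k: "k < p"
  have f: "finite {i. 1 \<le> i \<and> i \<le> k \<and> even (k - i)}" by (rule finite_subset[of _ "{..k}"]) auto
  show ?thesis unfolding qdfact_def using f k qint_nz by (simp add: prod_zero_iff)
qed

lemma H_nz: "k < N \<Longrightarrow> 2*N < p \<Longrightarrow> H N k \<noteq> 0"
  by (simp add: H_def qint_nz qintp_nz)

lemma G_rep:
  assumes "k < N" "2*N < p"
  shows "qdfact A (p - 2*N + 2*k) * qfactp A (p - 2*N + k) = (qdfact A (p - 2*N) * qfactp A (p - 2*N)) * H N k"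
proof -
  have a: "(\<Prod>j=1..k. qint A (p - 2*N + 2*j)) = (\<Prod>j=1..k. - qint A (2*N - 2*j))"
  proof (rule prod.cong)
    fix j assume "j \<in> {1..k}"
    then have "p - 2*N + 2*j = p - (2*N-2*j)" "2*N-2*j \<le> p" using assms by auto
    then show "qint A (p - 2*N + 2*j) = - qint A (2*N - 2*j)" by (metis qint_refl)
  qed simp
  have b: "(\<Prod>j=1..k. qintp A (p - 2*N + j)) = (\<Prod>j=1..k. qintp A (2*N - j))"
  proof (rule prod.cong)
    fix j assume "j \<in> {1..k}"
    then have "p - 2*N + j = p - (2*N-j)" "2*N-j \<le> p" using assms by auto
    then show "qintp A (p - 2*N + j) = qintp A (2*N - j)" by (metis qintp_refl)
  qed simp
  show ?thesis
    unfolding qdfact_add qfactp_add a b H_def by (simp add: prod.distrib[symmetric])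
qed

lemma main_eq:
  assumes "n < N" "m < N" "2*N < p"
  shows "cpoly (U n * W N m * V m * Z N n) A \<noteq> 0 \<and>
    Rc A ((p - 1) div 2 - N) n m = cpoly (U m * W N n * V n * Z N m) A / cpoly (U n * W N m * V m * Z N n) A"
proof -
  let ?c = "(p - 1) div 2 - N"
  have c1: "2 * ?c + 2*n + 1 = p - 2*N + 2*n" "2 * ?c + 2*m + 1 = p - 2*N + 2*m"
       "2 * ?c + n + 1 = p - 2*N + n" "2 * ?c + m + 1 = p - 2*N + m"
    using assms oddp by (auto elim!: oddE)
  define K where "K = qdfact A (p - 2*N) * qfactp A (p - 2*N)"
  have K: "K \<noteq> 0" unfolding K_def using qdfact_nz qfactp_nz assms by simp
  have Rc1: "Rc A ?c n m = qfact A m * (K * H N n) / (qfact A n * (K * H N m))"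
    unfolding Rc_def c1 using G_rep[of n] G_rep[of m] assms by (simp add: K_def mult.assoc)
  have u: "cpoly (U k) A \<noteq> 0" if "k < p" for k using qfact_nz[OF that] qfact_rep[of k] by auto
  have w: "cpoly (W N k) A \<noteq> 0" if "k < N" for k using H_nz[OF that assms(3)] H_rep[of N k] by auto
  have nz: "cpoly (U n) A \<noteq> 0" "cpoly (U m) A \<noteq> 0" "cpoly (W N n) A \<noteq> 0" "cpoly (W N m) A \<noteq> 0"
    using u w assms by auto
  show ?thesis
    using nz V_nz Z_nz E_nz K unfolding Rc1 qfact_rep H_rep
    by (simp add: field_simps)
qed

end

theorem lemma1:
  fixes N n m :: nat
  assumes "N \<ge> 2" and "n < N" and "m < N"
  shows "\<exists>P Q :: rat poly.
     poly Q (-1) \<noteq> 0 \<and>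
     (\<forall>p A. odd p \<and> p \<ge> 2*N + 1 \<and> primitive_root_of_unity (2*p) A \<longrightarrow>
        cpoly Q A \<noteq> 0 \<and>
        Rc A ((p - 1) div 2 - N) n m = cpoly P A / cpoly Q A) \<and>
     poly P (-1) / poly Q (-1) =
       (-4) powi (int n - int m) * fact m * fact (N - 1 - m) / (fact n * fact (N - 1 - n))"
proof (intro exI conjI allI impI)
  let ?P = "U m * W N n * V n * Z N m" and ?Q = "U n * W N m * V m * Z N n"
  have wn: "poly (W N n) (-1) * fact (N-1-n) = (-4)^n * (fact (N-1) :: rat)" using W_val assms by simp
  have wm: "poly (W N m) (-1) * fact (N-1-m) = (-4)^m * (fact (N-1) :: rat)" using W_val assms by simp
  have wm0: "poly (W N m) (-1) \<noteq> 0" using wm by auto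
  have wn0: "poly (W N n) (-1) \<noteq> 0" using wn by auto
  show "poly ?Q (-1) \<noteq> 0" using wm0 by (simp add: U_val V_val Z_val)
  fix p A assume h: "odd p \<and> p \<ge> 2*N + 1 \<and> primitive_root_of_unity (2*p) A"
  then interpret proot p A by unfold_locales (use assms in auto)
  have "2*N < p" using h by simp
  then show "cpoly ?Q A \<noteq> 0" "Rc A ((p - 1) div 2 - N) n m = cpoly ?P A / cpoly ?Q A"
    using main_eq assms by auto
next
  let ?P = "U m * W N n * V n * Z N m" and ?Q = "U n * W N m * V m * Z N n"
  have wn: "poly (W N n) (-1) * fact (N-1-n) = (-4)^n * (fact (N-1) :: rat)" using W_val assms by simp
  have wm: "poly (W N m) (-1) * fact (N-1-m) = (-4)^m * (fact (N-1) :: rat)" using W_val assms by simp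
  have wm0: "poly (W N m) (-1) \<noteq> 0" using wm by auto
  have pw: "(-4::rat) powi (int n - int m) = (-4)^n / (-4)^m" by (simp add: power_int_diff)
  have "poly ?P (-1) / poly ?Q (-1) = fact m * poly (W N n) (-1) / (fact n * poly (W N m) (-1))"
    by (simp add: U_val V_val Z_val)
  also have "\<dots> = (-4) powi (int n - int m) * fact m * fact (N - 1 - m) / (fact n * fact (N - 1 - n))"
  proof -
    have wn': "poly (W N n) (-1) = (-4)^n * fact (N-1) / fact (N-1-n)" using wn by (simp add: field_simps)
    have wm': "poly (W N m) (-1) = (-4)^m * fact (N-1) / fact (N-1-m)" using wm by (simp add: field_simps)
    show ?thesis unfolding pw wn' wm' by (simp add: field_simps)
  qed
  finally show "poly ?P (-1) / poly ?Q (-1) = (-4) powi (int n - int m) * fact m * fact (N - 1 - m) / (fact n * fact (N - 1 - n))" .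
qed
end
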